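(* Let $\tilde i\ge1$ be an integer and let $\alpha_0,\alpha_1,\dots,\alpha_{\tilde i+1}$ be positive real numbers. Then $$\sum_{i=1}^{\tilde i+1}\left[\prod_{j=i+1}^{\tilde i+1}\left(\frac{\alpha_{j-1}}{\alpha_j}\right)^{2^{\tilde i-j+2}}\right]\left(\alpha_i^{2^{\tilde i-i+2}-1}-\alpha_{i-1}^{2^{\tilde i-i+2}-1}\right)\alpha_i^{-2^{\tilde i-i+2}}\le\alpha_{\tilde i+1}^{-1}.$$
   Context: An empty product (when $i=\tilde i+1$) equals $1$. *)

theory Defs
  imports Complex_Main
begin

end

theory Submission
  imports Defs
begin

lemma key_step:
  fixes a b F :: real and e :: nat
  assumes "a > 0" "b > 0" "e \<ge> 1" "F \<le> 1 / a"
  shows "(a / b) ^ e * F + (b ^ (e - 1) - a ^ (e - 1)) / b ^ e \<le> 1 / b"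
proof -
  have c: "(a / b) ^ e \<ge> 0" using assms by simp
  have "(a / b) ^ e * F \<le> (a / b) ^ e * (1 / a)"
    using mult_left_mono[OF assms(4) c] .
  also have "\<dots> = a ^ (e - 1) / b ^ e"
  proof -
    have "a ^ e = a * a ^ (e - 1)" using assms(3)
      by (metis Suc_diff_le diff_Suc_1 power_Suc)
    then show ?thesis using assms by (simp add: power_divide)
  qed
  finally have h: "(a / b) ^ e * F \<le> a ^ (e - 1) / b ^ e" .
  have "b ^ (e - 1) / b ^ e = 1 / b"
  proof -
    have "b ^ e = b * b ^ (e - 1)" using assms(3)
      by (metis Suc_diff_le diff_Suc_1 power_Suc)
    then show ?thesis using assms by simp
  qed
  then have "(b ^ (e - 1) - a ^ (e - 1)) / b ^ e = 1 / b - a ^ (e - 1) / b ^ e"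
    by (simp add: diff_divide_distrib)
  with h show ?thesis by linarith
qed

lemma gen:
  fixes a :: "nat \<Rightarrow> real" and e :: "nat \<Rightarrow> nat"
  assumes "\<And>j. e j \<ge> 1" "\<And>k. k \<le> n \<Longrightarrow> a k > 0"
  shows "k \<le> n \<Longrightarrow> (\<Sum>i = 1..k.
            (\<Prod>j = i+1..k. (a (j - 1) / a j) ^ (e j))
            * (a i ^ (e i - 1) - a (i - 1) ^ (e i - 1)) / a i ^ (e i)) \<le> 1 / a k"
proof (induction k)
  case 0
  then show ?case using assms(2)[of 0] by simp
next
  case (Suc k)
  let ?F = "\<lambda>k. (\<Sum>i = 1..k.
            (\<Prod>j = i+1..k. (a (j - 1) / a j) ^ (e j))
            * (a i ^ (e i - 1) - a (i - 1) ^ (e i - 1)) / a i ^ (e i))"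
  have IH: "?F k \<le> 1 / a k" using Suc by simp
  have "?F (Suc k) = (\<Sum>i = 1..k.
            (\<Prod>j = i+1..Suc k. (a (j - 1) / a j) ^ (e j))
            * (a i ^ (e i - 1) - a (i - 1) ^ (e i - 1)) / a i ^ (e i))
      + (a (Suc k) ^ (e (Suc k) - 1) - a k ^ (e (Suc k) - 1)) / a (Suc k) ^ (e (Suc k))"
    by simp
  also have "(\<Sum>i = 1..k.
            (\<Prod>j = i+1..Suc k. (a (j - 1) / a j) ^ (e j))
            * (a i ^ (e i - 1) - a (i - 1) ^ (e i - 1)) / a i ^ (e i))
      = (\<Sum>i = 1..k. (a k / a (Suc k)) ^ e (Suc k) *
            ((\<Prod>j = i+1..k. (a (j - 1) / a j) ^ (e j))
            * (a i ^ (e i - 1) - a (i - 1) ^ (e i - 1)) / a i ^ (e i)))"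
  proof (rule sum.cong)
    fix i assume "i \<in> {1..k}"
    then have "i + 1 \<le> Suc k" by simp
    then show "(\<Prod>j = i+1..Suc k. (a (j - 1) / a j) ^ (e j))
            * (a i ^ (e i - 1) - a (i - 1) ^ (e i - 1)) / a i ^ (e i)
      = (a k / a (Suc k)) ^ e (Suc k) *
            ((\<Prod>j = i+1..k. (a (j - 1) / a j) ^ (e j))
            * (a i ^ (e i - 1) - a (i - 1) ^ (e i - 1)) / a i ^ (e i))"
      by (simp add: prod.nat_ivl_Suc')
  qed simp
  also have "\<dots> = (a k / a (Suc k)) ^ e (Suc k) * ?F k"
    by (simp add: sum_distrib_left)
  finally have eq: "?F (Suc k) = (a k / a (Suc k)) ^ e (Suc k) * ?F k
      + (a (Suc k) ^ (e (Suc k) - 1) - a k ^ (e (Suc k) - 1)) / a (Suc k) ^ (e (Suc k))" .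
  show ?case unfolding eq
    by (rule key_step) (use Suc assms IH in auto)
qed

theorem lemma9:
  fixes m :: nat and \<alpha> :: "nat \<Rightarrow> real"
  assumes "m \<ge> 1"
    and "\<And>k. k \<le> m + 1 \<Longrightarrow> \<alpha> k > 0"
  shows "(\<Sum>i = 1..m+1.
            (\<Prod>j = i+1..m+1. (\<alpha> (j - 1) / \<alpha> j) ^ (2 ^ (m + 2 - j)))
            * (\<alpha> i ^ (2 ^ (m + 2 - i) - 1) - \<alpha> (i - 1) ^ (2 ^ (m + 2 - i) - 1))
            / \<alpha> i ^ (2 ^ (m + 2 - i)))
         \<le> 1 / \<alpha> (m + 1)"
  using gen[of "\<lambda>j. 2 ^ (m + 2 - j)" "m+1" \<alpha> "m+1"] assms by simp

end
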